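(* Let $\mathcal R=(R,\delta_R)$ be a differential $k$-ring such that the only $k$-algebra automorphism of $R$ commuting with $\delta_R$ is the identity. Let $\mathcal A_1,\mathcal A_2$ be $\mathcal R$-conformal superalgebras such that the canonical maps $R\to\mathrm{Ctd}_k(\mathcal A_i)$, $r\mapsto r_{\mathcal A_i}$, are $k$-algebra isomorphisms for $i=1,2$. Then $\mathcal A_1$ and $\mathcal A_2$ are isomorphic as $k$-conformal superalgebras (by restriction of scalars) if and only if they are isomorphic as $\mathcal R$-conformal superalgebras.
   Context: Let $k$ be a field of characteristic $0$. A differential $k$-ring is $(R,\delta_R)$ with $R$ a commutative unital $k$-algebra and $\delta_R$ a $k$-linear derivation. An $\mathcal R$-conformal superalgebra is a $\mathbb Z/2\mathbb Z$-graded $R$-module $\mathcal A$ with parity-preserving $k$-linear $\partial_{\mathcal A}$ and $k$-bilinear products $a_{(n)}b$ ($n\in\mathbb Z_+$) satisfying: $a_{(n)}b=0$ for $n\gg0$; $(\partial_{\mathcal A}a)_{(n)}b=-na_{(n-1)}b$, $a_{(n)}\partial_{\mathcal A}b=\partial_{\mathcal A}(a_{(n)}b)+na_{(n-1)}b$; $\partial_{\mathcal A}(ra)=r\partial_{\mathcal A}a+\delta_R(r)a$; $a_{(n)}(rb)=r(a_{(n)}b)$, $(ra)_{(n)}b=\sum_j\frac1{j!}\delta_R^j(r)(a_{(n+j)}b)$. Homomorphisms: even $R$-linear maps preserving $n$-products and commuting with $\partial$. A $k$-conformal superalgebra is one over $(k,0)$, and $\mathcal R$-conformal superalgebras are $k$-conformal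 by restriction. $\mathrm{Ctd}_k(\mathcal A)$ is the set of even $k$-linear endomorphisms $\chi$ of $\mathcal A$ with $\chi(a_{(n)}b)=a_{(n)}\chi(b)$ for all $a,b\in\mathcal A$, $n\ge0$; $r_{\mathcal A}$ denotes $a\mapsto ra$. *)

theory Defs
  imports Main
begin

text \<open>The k-algebra R is a type 'r of
class comm_ring_1 together with its structure map phi : k -> R (a unital ring homomorphism),
so that c r = phi c * r.\<close>

definition k_algebra :: "('k::field_char_0 \<Rightarrow> 'r::comm_ring_1) \<Rightarrow> bool" where
  "k_algebra phi \<longleftrightarrow> phi 1 = 1 \<and> (\<forall>c d. phi (c + d) = phi c + phi d) \<and>
     (\<forall>c d. phi (c * d) = phi c * phi d)"

definition diff_k_ring :: "('k::field_char_0 \<Rightarrow> 'r::comm_ring_1) \<Rightarrow> ('r \<Rightarrow> 'r) \<Rightarrow> bool" where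
  "diff_k_ring phi delta \<longleftrightarrow> k_algebra phi \<and>
     (\<forall>r s. delta (r + s) = delta r + delta s) \<and>
     (\<forall>c r. delta (phi c * r) = phi c * delta r) \<and>
     (\<forall>r s. delta (r * s) = r * delta s + delta r * s)"

definition diff_k_aut :: "('k::field_char_0 \<Rightarrow> 'r::comm_ring_1) \<Rightarrow> ('r \<Rightarrow> 'r) \<Rightarrow> ('r \<Rightarrow> 'r) \<Rightarrow> bool" where
  "diff_k_aut phi delta sigma \<longleftrightarrow> bij sigma \<and> sigma 1 = 1 \<and>
     (\<forall>r s. sigma (r + s) = sigma r + sigma s) \<and> (\<forall>r s. sigma (r * s) = sigma r * sigma s) \<and>
     (\<forall>c. sigma (phi c) = phi c) \<and> (\<forall>r. sigma (delta r) = delta (sigma r))"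

text \<open>Data of a Z/2Z-graded R-module with derivation and n-products (n in Z_+ = nat).
 ev / od are the even and odd parts.\<close>
record ('r, 'a) csa =
  smul :: "'r \<Rightarrow> 'a \<Rightarrow> 'a"
  ev :: "'a set"
  od :: "'a set"
  der :: "'a \<Rightarrow> 'a"
  prd :: "nat \<Rightarrow> 'a \<Rightarrow> 'a \<Rightarrow> 'a"

definition graded_module :: "('r::comm_ring_1, 'a::ab_group_add) csa \<Rightarrow> bool" where
  "graded_module A \<longleftrightarrow>
     (\<forall>r s a. smul A (r + s) a = smul A r a + smul A s a) \<and>
     (\<forall>r a b. smul A r (a + b) = smul A r a + smul A r b) \<and>
     (\<forall>r s a. smul A (r * s) a = smul A r (smul A s a)) \<and>
     (\<forall>a. smul A 1 a = a) \<and>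
     0 \<in> ev A \<and> 0 \<in> od A \<and>
     (\<forall>a\<in>ev A. \<forall>b\<in>ev A. a + b \<in> ev A) \<and> (\<forall>a\<in>od A. \<forall>b\<in>od A. a + b \<in> od A) \<and>
     (\<forall>a\<in>ev A. - a \<in> ev A) \<and> (\<forall>a\<in>od A. - a \<in> od A) \<and>
     (\<forall>r. \<forall>a\<in>ev A. smul A r a \<in> ev A) \<and> (\<forall>r. \<forall>a\<in>od A. smul A r a \<in> od A) \<and>
     ev A \<inter> od A = {0} \<and> (\<forall>x. \<exists>a\<in>ev A. \<exists>b\<in>od A. x = a + b)"

definition conformal_superalgebra ::
  "('k::field_char_0 \<Rightarrow> 'r::comm_ring_1) \<Rightarrow> ('r \<Rightarrow> 'r) \<Rightarrow> ('r, 'a::ab_group_add) csa \<Rightarrow> bool" where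
  "conformal_superalgebra phi delta A \<longleftrightarrow> graded_module A \<and>
     \<comment> \<open>partial is parity preserving and k-linear\<close>
     (\<forall>a\<in>ev A. der A a \<in> ev A) \<and> (\<forall>a\<in>od A. der A a \<in> od A) \<and>
     (\<forall>a b. der A (a + b) = der A a + der A b) \<and>
     (\<forall>c a. der A (smul A (phi c) a) = smul A (phi c) (der A a)) \<and>
     \<comment> \<open>n-products are k-bilinear\<close>
     (\<forall>n a b c. prd A n (a + b) c = prd A n a c + prd A n b c) \<and>
     (\<forall>n a b c. prd A n a (b + c) = prd A n a b + prd A n a c) \<and>
     (\<forall>n c a b. prd A n (smul A (phi c) a) b = smul A (phi c) (prd A n a b)) \<and>
     (\<forall>n c a b. prd A n a (smul A (phi c) b) = smul A (phi c) (prd A n a b)) \<and>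
     \<comment> \<open>locality\<close>
     (\<forall>a b. \<exists>N. \<forall>m\<ge>N. prd A m a b = 0) \<and>
     \<comment> \<open>sesquilinearity w.r.t. partial (n a_(n-1) b is 0 for n = 0)\<close>
     (\<forall>n a b. prd A n (der A a) b = - smul A (of_nat n) (prd A (n - 1) a b)) \<and>
     (\<forall>n a b. prd A n a (der A b) = der A (prd A n a b) + smul A (of_nat n) (prd A (n - 1) a b)) \<and>
     \<comment> \<open>compatibility with the R-action\<close>
     (\<forall>r a. der A (smul A r a) = smul A r (der A a) + smul A (delta r) a) \<and>
     (\<forall>n a r b. prd A n a (smul A r b) = smul A r (prd A n a b)) \<and>
     \<comment> \<open>(ra)_(n) b = sum_j 1/j! delta^j(r) (a_(n+j) b); the sum is finite, and any N beyond
        which the products a_(m) b vanish bounds the nonzero terms\<close>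
     (\<forall>n r a b N. (\<forall>m\<ge>N. prd A m a b = 0) \<longrightarrow>
        prd A n (smul A r a) b =
          (\<Sum>j<N. smul A (phi (inverse (fact j)) * (delta ^^ j) r) (prd A (n + j) a b)))"

definition Ctd :: "('k::field_char_0 \<Rightarrow> 'r::comm_ring_1) \<Rightarrow> ('r, 'a::ab_group_add) csa \<Rightarrow> ('a \<Rightarrow> 'a) set" where
  "Ctd phi A = {chi. (\<forall>a b. chi (a + b) = chi a + chi b) \<and>
      (\<forall>c a. chi (smul A (phi c) a) = smul A (phi c) (chi a)) \<and>
      (\<forall>a\<in>ev A. chi a \<in> ev A) \<and> (\<forall>a\<in>od A. chi a \<in> od A) \<and>
      (\<forall>n a b. chi (prd A n a b) = prd A n a (chi b))}"

definition canonical_map_iso :: "('k::field_char_0 \<Rightarrow> 'r::comm_ring_1) \<Rightarrow> ('r, 'a::ab_group_add) csa \<Rightarrow> bool" where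
  "canonical_map_iso phi A \<longleftrightarrow> bij_betw (\<lambda>r. smul A r) UNIV (Ctd phi A) \<and>
     smul A 1 = id \<and> (\<forall>r s. smul A (r * s) = smul A r \<circ> smul A s) \<and>
     (\<forall>r s. smul A (r + s) = (\<lambda>a. smul A r a + smul A s a)) \<and>
     (\<forall>c r. smul A (phi c * r) = (\<lambda>a. smul A (phi c) (smul A r a)))"

definition k_conformal_iso ::
  "('k::field_char_0 \<Rightarrow> 'r::comm_ring_1) \<Rightarrow> ('r, 'a::ab_group_add) csa \<Rightarrow> ('r, 'b::ab_group_add) csa \<Rightarrow> ('a \<Rightarrow> 'b) \<Rightarrow> bool" where
  "k_conformal_iso phi A B f \<longleftrightarrow> bij f \<and>
     (\<forall>a b. f (a + b) = f a + f b) \<and>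
     (\<forall>c a. f (smul A (phi c) a) = smul B (phi c) (f a)) \<and>
     (\<forall>a\<in>ev A. f a \<in> ev B) \<and> (\<forall>a\<in>od A. f a \<in> od B) \<and>
     (\<forall>n a b. f (prd A n a b) = prd B n (f a) (f b)) \<and>
     (\<forall>a. f (der A a) = der B (f a))"

definition R_conformal_iso ::
  "('r::comm_ring_1, 'a::ab_group_add) csa \<Rightarrow> ('r, 'b::ab_group_add) csa \<Rightarrow> ('a \<Rightarrow> 'b) \<Rightarrow> bool" where
  "R_conformal_iso A B f \<longleftrightarrow> bij f \<and>
     (\<forall>a b. f (a + b) = f a + f b) \<and>
     (\<forall>r a. f (smul A r a) = smul B r (f a)) \<and>
     (\<forall>a\<in>ev A. f a \<in> ev B) \<and> (\<forall>a\<in>od A. f a \<in> od B) \<and>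
     (\<forall>n a b. f (prd A n a b) = prd B n (f a) (f b)) \<and>
     (\<forall>a. f (der A a) = der B (f a))"

end

theory Submission
  imports Defs
begin

lemma inv_add:
  assumes "bij f" "\<forall>a b. f (a + b) = f a + f b"
  shows "inv f (x + y) = inv f x + inv f y"
proof -
  have "f (inv f x + inv f y) = x + y" using assms by (simp add: bij_is_surj surj_f_inv_f)
  hence "inv f (x + y) = inv f (f (inv f x + inv f y))" by simp
  also have "\<dots> = inv f x + inv f y" using assms(1) by (meson bij_is_inj inv_f_f)
  finally show ?thesis .
qed

lemma add_hom_zero:
  fixes f :: "'a::ab_group_add \<Rightarrow> 'b::ab_group_add"
  assumes "\<forall>a b. f (a + b) = f a + f b"
  shows "f 0 = 0" and "f (- x) = - f x" and "f (x - y) = f x - f y"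
proof -
  have "f (0 + 0) = f 0 + f 0" using assms by blast
  thus z: "f 0 = 0" by simp
  have "f (x + - x) = f x + f (- x)" using assms by blast
  with z show n: "f (- x) = - f x" by (metis add.commute add_eq_0_iff)
  have "f (x + - y) = f x + f (- y)" using assms by blast
  thus "f (x - y) = f x - f y" using assms
    by (metis add_uminus_conv_diff \<open>f (x + - x) = f x + f (- x)\<close> add_right_cancel
        diff_add_cancel)
qed

lemma kiso_inv:
  assumes "k_conformal_iso phi A B f" "graded_module A" "graded_module B"
  shows "k_conformal_iso phi B A (inv f)"
proof -
  have bf: "bij f" and ad: "\<forall>a b. f (a + b) = f a + f b"
    and kl: "\<forall>c a. f (smul A (phi c) a) = smul B (phi c) (f a)"
    and ev: "\<forall>a\<in>ev A. f a \<in> ev B" and od: "\<forall>a\<in>od A. f a \<in> od B"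
    and pr: "\<forall>n a b. f (prd A n a b) = prd B n (f a) (f b)"
    and de: "\<forall>a. f (der A a) = der B (f a)"
    using assms(1) unfolding k_conformal_iso_def by auto
  have ff: "\<And>x. f (inv f x) = x" using bf by (simp add: bij_is_surj surj_f_inv_f)
  have if': "\<And>x. inv f (f x) = x" using bf by (simp add: bij_is_inj)
  have f0: "f 0 = 0" using add_hom_zero(1)[OF ad] .
  have injf: "\<And>x y. f x = f y \<Longrightarrow> x = y" by (metis if')
  have GA: "\<forall>x. \<exists>a\<in>ev A. \<exists>b\<in>od A. x = a + b" "ev A \<inter> od A = {0}"
    using assms(2) unfolding graded_module_def by auto
  have GB: "\<forall>a\<in>ev B. \<forall>b\<in>ev B. a + b \<in> ev B" "\<forall>a\<in>od B. \<forall>b\<in>od B. a + b \<in> od B"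
    "\<forall>a\<in>ev B. - a \<in> ev B" "\<forall>a\<in>od B. - a \<in> od B" "ev B \<inter> od B = {0}"
    using assms(3) unfolding graded_module_def by auto
  have pe: "inv f y \<in> ev A" if "y \<in> ev B" for y
  proof -
    obtain a b where ab: "a \<in> ev A" "b \<in> od A" "inv f y = a + b" using GA(1) by blast
    have "y = f a + f b" using ab ff ad by metis
    hence "f b = y + - f a" by (simp add: algebra_simps)
    hence "f b \<in> ev B" using GB ev ab that by (metis (no_types))
    moreover have "f b \<in> od B" using od ab by blast
    ultimately have "f b = 0" using GB(5) by blast
    hence "b = 0" using f0 injf by metis
    thus ?thesis using ab by simp
  qed
  have po: "inv f y \<in> od A" if "y \<in> od B" for y
  proof -
    obtain a b where ab: "a \<in> ev A" "b \<in> od A" "inv f y = a + b" using GA(1) by blast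
    have "y = f a + f b" using ab ff ad by metis
    hence "f a = y + - f b" by (simp add: algebra_simps)
    hence "f a \<in> od B" using GB od ab that by (metis (no_types))
    moreover have "f a \<in> ev B" using ev ab by blast
    ultimately have "f a = 0" using GB(5) by blast
    hence "a = 0" using f0 injf by metis
    thus ?thesis using ab by simp
  qed
  show ?thesis unfolding k_conformal_iso_def
  proof (intro conjI allI ballI)
    show "bij (inv f)" using bf by (simp add: bij_imp_bij_inv)
    show "inv f (a + b) = inv f a + inv f b" for a b using inv_add[OF bf ad] .
    show "inv f (smul B (phi c) a) = smul A (phi c) (inv f a)" for c a
      by (metis ff if' kl)
    show "inv f (prd B n a b) = prd A n (inv f a) (inv f b)" for n a b
      by (metis ff if' pr)
    show "inv f (der B a) = der A (inv f a)" for a by (metis ff if' de)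
  qed (auto intro: pe po)
qed

lemma ctd_conj:
  assumes "k_conformal_iso phi A B g" "graded_module A" "graded_module B"
    and "chi \<in> Ctd phi A"
  shows "(\<lambda>x. g (chi (inv g x))) \<in> Ctd phi B"
proof -
  have ig: "k_conformal_iso phi B A (inv g)" using kiso_inv[OF assms(1-3)] .
  have bf: "bij g" and ad: "\<forall>a b. g (a + b) = g a + g b"
    and kl: "\<forall>c a. g (smul A (phi c) a) = smul B (phi c) (g a)"
    and ev: "\<forall>a\<in>ev A. g a \<in> ev B" and od: "\<forall>a\<in>od A. g a \<in> od B"
    and pr: "\<forall>n a b. g (prd A n a b) = prd B n (g a) (g b)"
    using assms(1) unfolding k_conformal_iso_def by auto
  have iad: "\<forall>a b. inv g (a + b) = inv g a + inv g b"
    and ikl: "\<forall>c a. inv g (smul B (phi c) a) = smul A (phi c) (inv g a)"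
    and iev: "\<forall>a\<in>ev B. inv g a \<in> ev A" and iod: "\<forall>a\<in>od B. inv g a \<in> od A"
    and ipr: "\<forall>n a b. inv g (prd B n a b) = prd A n (inv g a) (inv g b)"
    using ig unfolding k_conformal_iso_def by auto
  have ff: "\<And>x. g (inv g x) = x" using bf by (simp add: bij_is_surj surj_f_inv_f)
  have c: "\<forall>a b. chi (a + b) = chi a + chi b"
      "\<forall>c a. chi (smul A (phi c) a) = smul A (phi c) (chi a)"
      "\<forall>a\<in>ev A. chi a \<in> ev A" "\<forall>a\<in>od A. chi a \<in> od A"
      "\<forall>n a b. chi (prd A n a b) = prd A n a (chi b)"
    using assms(4) unfolding Ctd_def by auto
  show ?thesis unfolding Ctd_def
    using c ad kl ev od pr iad ikl iev iod ipr ff by auto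
qed

theorem mainTheorem7:
  fixes phi :: "'k::field_char_0 \<Rightarrow> 'r::comm_ring_1"
    and delta :: "'r \<Rightarrow> 'r"
    and A1 :: "('r, 'a::ab_group_add) csa"
    and A2 :: "('r, 'b::ab_group_add) csa"
  assumes "diff_k_ring phi delta"
    and "\<And>sigma. diff_k_aut phi delta sigma \<Longrightarrow> sigma = id"
    and "conformal_superalgebra phi delta A1"
    and "conformal_superalgebra phi delta A2"
    and "canonical_map_iso phi A1"
    and "canonical_map_iso phi A2"
  shows "(\<exists>f. k_conformal_iso phi A1 A2 f) \<longleftrightarrow> (\<exists>f. R_conformal_iso A1 A2 f)"
proof
  assume "\<exists>f. R_conformal_iso A1 A2 f"
  then obtain f where "R_conformal_iso A1 A2 f" by blast
  hence "k_conformal_iso phi A1 A2 f" unfolding R_conformal_iso_def k_conformal_iso_def by auto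
  thus "\<exists>f. k_conformal_iso phi A1 A2 f" by blast
next
  assume "\<exists>f. k_conformal_iso phi A1 A2 f"
  then obtain f where fk: "k_conformal_iso phi A1 A2 f" by blast
  have g1: "graded_module A1" and g2: "graded_module A2"
    using assms(3,4) unfolding conformal_superalgebra_def by auto
  have bf: "bij f" and ad: "\<forall>a b. f (a + b) = f a + f b"
    and kl: "\<forall>c a. f (smul A1 (phi c) a) = smul A2 (phi c) (f a)"
    and de: "\<forall>a. f (der A1 a) = der A2 (f a)"
    using fk unfolding k_conformal_iso_def by auto
  have ff: "\<And>x. f (inv f x) = x" using bf by (simp add: bij_is_surj surj_f_inv_f)
  have if': "\<And>x. inv f (f x) = x" using bf by (simp add: bij_is_inj)
  have injf: "\<And>x y. f x = f y \<Longrightarrow> x = y" by (metis if')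
  have b1: "bij_betw (\<lambda>r. smul A1 r) UNIV (Ctd phi A1)"
    and b2: "bij_betw (\<lambda>r. smul A2 r) UNIV (Ctd phi A2)"
    using assms(5,6) unfolding canonical_map_iso_def by auto
  have inj2: "\<And>r s. smul A2 r = smul A2 s \<Longrightarrow> r = s"
    using b2 unfolding bij_betw_def inj_on_def by blast
  have inj1: "\<And>r s. smul A1 r = smul A1 s \<Longrightarrow> r = s"
    using b1 unfolding bij_betw_def inj_on_def by blast
  have ctd1: "\<And>r. smul A1 r \<in> Ctd phi A1" using b1 unfolding bij_betw_def by blast
  have sur1: "\<And>chi. chi \<in> Ctd phi A1 \<Longrightarrow> \<exists>r. smul A1 r = chi"
    using b1 unfolding bij_betw_def by (metis UNIV_I imageE)
  have sur2: "\<And>chi. chi \<in> Ctd phi A2 \<Longrightarrow> \<exists>r. smul A2 r = chi"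
    using b2 unfolding bij_betw_def by (metis UNIV_I imageE)
  define sigma where "sigma r = (SOME s. smul A2 s = (\<lambda>x. f (smul A1 r (inv f x))))" for r
  have S: "smul A2 (sigma r) = (\<lambda>x. f (smul A1 r (inv f x)))" for r
  proof -
    have "(\<lambda>x. f (smul A1 r (inv f x))) \<in> Ctd phi A2"
      using ctd_conj[OF fk g1 g2 ctd1] .
    from sur2[OF this] show ?thesis unfolding sigma_def by (rule someI_ex)
  qed
  have S': "smul A2 (sigma r) (f a) = f (smul A1 r a)" for r a using S[of r] if' by simp
  have sigid: "sigma = id"
  proof (rule assms(2))
    show "diff_k_aut phi delta sigma" unfolding diff_k_aut_def
    proof (intro conjI allI)
      show "bij sigma"
      proof (rule bijI)
        show "inj sigma"
        proof (rule injI)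
          fix r s assume "sigma r = sigma s"
          hence "\<And>a. f (smul A1 r a) = f (smul A1 s a)" using S' by metis
          hence "smul A1 r = smul A1 s" using injf by blast
          thus "r = s" by (rule inj1)
        qed
        show "surj sigma"
        proof (rule surjI)
          fix s
          have ik: "k_conformal_iso phi A2 A1 (inv f)" using kiso_inv[OF fk g1 g2] .
          have "smul A2 s \<in> Ctd phi A2" using b2 unfolding bij_betw_def by blast
          from ctd_conj[OF ik g2 g1 this]
          have "(\<lambda>x. inv f (smul A2 s (f x))) \<in> Ctd phi A1"
            using bf by (simp add: inv_inv_eq)
          then obtain r where r: "smul A1 r = (\<lambda>x. inv f (smul A2 s (f x)))"
            using sur1 by blast
          have "smul A2 (sigma r) = smul A2 s" using S[of r] r ff by simp
          thus "sigma (SOME r. sigma r = s) = s"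
            by (metis (mono_tags, lifting) inj2 someI_ex)
        qed
      qed
      have "smul A2 (sigma 1) = smul A2 1"
        using S[of 1] assms(5,6) ff unfolding canonical_map_iso_def by (simp add: id_def)
      thus "sigma 1 = 1" by (rule inj2)
      fix r s
      have "smul A2 (sigma (r + s)) = smul A2 (sigma r + sigma s)"
        using assms(5,6) S ad unfolding canonical_map_iso_def by simp
      thus "sigma (r + s) = sigma r + sigma s" by (rule inj2)
      have "smul A2 (sigma (r * s)) = smul A2 (sigma r * sigma s)"
        using assms(5,6) S if' unfolding canonical_map_iso_def by auto
      thus "sigma (r * s) = sigma r * sigma s" by (rule inj2)
    next
      fix c
      have "smul A2 (sigma (phi c)) = smul A2 (phi c)"
        using S kl ff by auto
      thus "sigma (phi c) = phi c" by (rule inj2)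
    next
      fix r
      have D1: "smul A1 (delta r) a = der A1 (smul A1 r a) - smul A1 r (der A1 a)" for a
        using assms(3) unfolding conformal_superalgebra_def by (simp add: algebra_simps)
      have D2: "smul A2 (delta t) b = der A2 (smul A2 t b) - smul A2 t (der A2 b)" for t b
        using assms(4) unfolding conformal_superalgebra_def by (simp add: algebra_simps)
      have "smul A2 (sigma (delta r)) (f a) = smul A2 (delta (sigma r)) (f a)" for a
        unfolding S' D1 D2 add_hom_zero(3)[OF ad] using de S' by (metis (no_types))
      hence "smul A2 (sigma (delta r)) = smul A2 (delta (sigma r))"
        by (metis ff ext)
      thus "sigma (delta r) = delta (sigma r)" by (rule inj2)
    qed
  qed
  have "R_conformal_iso A1 A2 f"
    using fk S' sigid unfolding k_conformal_iso_def R_conformal_iso_def by auto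
  thus "\<exists>f. R_conformal_iso A1 A2 f" by blast
qed

end
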